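(* Let $X$ be an arbitrary stationary process and $Z$ an admissible channel with respect to $Z^\star$. Then \[ I(X;Z(X))=I(X;Z^\star(X))=\lim_{n\to\infty}\frac{I(X_1^n;Z^\star(X_1^n))}{n}, \] the limit on the right-hand side exists, and $\mathsf{SCap}(Z)=\mathsf{SCap}(Z^\star)$.
   Context: A channel $Z$ with finite input alphabet assigns to each finite input string $x$ a random output $Z(x)$ in a discrete set; applying a channel to several inputs means independent applications. For a process $X=(X_i)_{i\in\mathbb N}$, $X_m^n=(X_m,\dots,X_n)$; $A\to B\to C$ denotes a Markov chain; logs base 2. $X$ is stationary if $(X_1,\dots,X_n)\sim(X_{1+s},\dots,X_{n+s})$ for all $n,s$; stationary ergodic if moreover $\mathbb E[f(X_1)]=\lim_n\frac1n\sum_{j\le n}f(X_j)$ a.s. for all $f\in L^1$. Information rate $I(X;Z(X))=\liminf_n I(X_1^n;Z(X_1^n))/n$; $\mathsf{SCap}(Z)=\sup_X I(X;Z(X))$ over stationary ergodic processes $X$. $Z$ is admissible with respect to $Z^\star$ (same input alphabet) if: (1) there is $c>0$ with $H(Z^\star(X_1^n))\le cn$ for every process $X$ and $n\ge1$; (2) $I(X;Z(X))=I(X;Z^\star(X))$ for every process $X$; (3) for every $X$ and $1\le m\le n$: $X_1^n\to Z^\star(X_1^m),Z^\star(X_{m+1}^n)\to Z^\star(X_1^n)$; (4a) for every integer $\tau\ge1$ there is a non-decreasing $\gamma_m=o(m)$ with $\sum_m\gamma_m/m^2<\infty$ such that for every $X$ and $n\ge\tau$ there are $W_{\mathrm{pre}},W_{\mathrm{suf}}$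 with $X_1^n\to Z^\star(X_1^n),W_{\mathrm{pre}}\to Z^\star(X_1^\tau),Z^\star(X_{\tau+1}^n)$, $X_1^n\to Z^\star(X_1^n),W_{\mathrm{suf}}\to Z^\star(X_1^{n-\tau}),Z^\star(X_{n-\tau+1}^n)$, $H(W_{\mathrm{pre}}),H(W_{\mathrm{suf}})\le\gamma_n$; (4b) there is $\alpha_m=o(m)$ such that for every $X$, $b$, $t$ there is $W$ with $X_1^{tb}\to Z^\star(X_1^{tb}),W\to Z^\star(X_1^b),\dots,Z^\star(X_{(t-1)b+1}^{tb})$ and $H(W)\le t\alpha_b$; (5) there is $\beta_m=o(m)$ such that for every $X$, $b$, $t$ there are $Y$ with $X_1^{tb}\to Z^\star(X_1^b),\dots,Z^\star(X_{(t-1)b+1}^{tb})\to Y$ and a deterministic $\phi$ with $Z^\star(X_1^{tb})=\phi(Z^\star(X_1^b),\dots,Z^\star(X_{(t-1)b+1}^{tb}),Y)$ and $\max_z\log|\phi^{-1}(z)|\le t\beta_b$. *)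

theory Defs
  imports "HOL-Probability.Probability" "HOL-Library.Landau_Symbols"
begin

text \<open>A process X = (X_1, X_2, ...) over the alphabet 'a is identified with its law P,
  a probability measure on sequences (nat => 'a) with the product sigma-algebra.
  The coordinate omega i of omega corresponds to X_(i+1) (0-based indexing).\<close>

definition is_process :: "(nat \<Rightarrow> 'a) measure \<Rightarrow> bool" where
  "is_process P \<longleftrightarrow> prob_space P \<and>
     sets P = sets (PiM UNIV (\<lambda>_. count_space (UNIV :: 'a set)))"

definition block_law :: "(nat \<Rightarrow> 'a) measure \<Rightarrow> nat \<Rightarrow> nat \<Rightarrow> 'a list measure" where
  "block_law P s n = distr P (count_space UNIV) (\<lambda>\<omega>. map (\<lambda>i. \<omega> (s + i)) [0..<n])"

definition stationary :: "(nat \<Rightarrow> 'a) measure \<Rightarrow> bool" where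
  "stationary P \<longleftrightarrow> (\<forall>n s. block_law P s n = block_law P 0 n)"

definition ergodic :: "(nat \<Rightarrow> 'a) measure \<Rightarrow> bool" where
  "ergodic P \<longleftrightarrow> stationary P \<and>
     (\<forall>f :: 'a \<Rightarrow> real. AE \<omega> in P.
        (\<lambda>n. (\<Sum>j<n. f (\<omega> j)) / real n) \<longlonglongrightarrow> (\<integral>\<omega>. f (\<omega> 0) \<partial>P))"

text \<open>Law of X_1^n as a pmf on strings (supported on strings of length n).\<close>
definition xpre :: "(nat \<Rightarrow> 'a) measure \<Rightarrow> nat \<Rightarrow> 'a list pmf" where
  "xpre P n = embed_pmf (\<lambda>xs. measure P {\<omega> \<in> space P. map \<omega> [0..<n] = xs})"

definition entropy_pmf :: "'x pmf \<Rightarrow> ennreal" where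
  "entropy_pmf p = (\<integral>\<^sup>+ y. ennreal (- pmf p y * log 2 (pmf p y)) \<partial>count_space UNIV)"

definition mutual_info_pmf :: "('x \<times> 'y) pmf \<Rightarrow> real" where
  "mutual_info_pmf q = infsum (\<lambda>(x, y). pmf q (x, y) *
      log 2 (pmf q (x, y) / (pmf (map_pmf fst q) x * pmf (map_pmf snd q) y))) UNIV"

definition markov :: "'o pmf \<Rightarrow> ('o \<Rightarrow> 'u) \<Rightarrow> ('o \<Rightarrow> 'v) \<Rightarrow> ('o \<Rightarrow> 'w) \<Rightarrow> bool" where
  "markov q A B C \<longleftrightarrow> (\<forall>a b c.
     measure_pmf.prob q {e. A e = a \<and> B e = b \<and> C e = c} * measure_pmf.prob q {e. B e = b}
     = measure_pmf.prob q {e. A e = a \<and> B e = b} * measure_pmf.prob q {e. B e = b \<and> C e = c})"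

text \<open>A channel with input alphabet 'a and discrete output set 'b maps each finite input
  string to the law of the random output.  Several applications are independent.\<close>

fun pmf_list :: "'b pmf list \<Rightarrow> 'b list pmf" where
  "pmf_list [] = return_pmf []"
| "pmf_list (p # ps) = bind_pmf p (\<lambda>z. map_pmf (\<lambda>zs. z # zs) (pmf_list ps))"

text \<open>blk x (i,j) is the substring x_(i+1) ... x_j (1-based), i.e. X_(i+1)^j.\<close>
definition blk :: "'a list \<Rightarrow> nat \<times> nat \<Rightarrow> 'a list" where
  "blk x ij = take (snd ij - fst ij) (drop (fst ij) x)"

definition chan_joint :: "('a list \<Rightarrow> 'c pmf) \<Rightarrow> 'a list pmf \<Rightarrow> (nat \<times> nat) list
     \<Rightarrow> ('a list \<times> 'c list) pmf" where
  "chan_joint Z \<mu> bs = bind_pmf \<mu> (\<lambda>x. map_pmf (\<lambda>zs. (x, zs)) (pmf_list (map (\<lambda>ij. Z (blk x ij)) bs)))"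

definition io_joint :: "('a list \<Rightarrow> 'b pmf) \<Rightarrow> 'a list pmf \<Rightarrow> ('a list \<times> 'b) pmf" where
  "io_joint Z \<mu> = bind_pmf \<mu> (\<lambda>x. map_pmf (\<lambda>z. (x, z)) (Z x))"

definition mi_n :: "('a list \<Rightarrow> 'b pmf) \<Rightarrow> (nat \<Rightarrow> 'a) measure \<Rightarrow> nat \<Rightarrow> real" where
  "mi_n Z P n = mutual_info_pmf (io_joint Z (xpre P n))"

definition info_rate :: "('a list \<Rightarrow> 'b pmf) \<Rightarrow> (nat \<Rightarrow> 'a) measure \<Rightarrow> ereal" where
  "info_rate Z P = liminf (\<lambda>n. ereal (mi_n Z P n / real n))"

definition SCap :: "('a list \<Rightarrow> 'b pmf) \<Rightarrow> ereal" where
  "SCap Z = (SUP P \<in> {P. is_process P \<and> ergodic P}. info_rate Z P)"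

definition blocks :: "nat \<Rightarrow> nat \<Rightarrow> (nat \<times> nat) list" where
  "blocks b t = map (\<lambda>k. (k * b, (k + 1) * b)) [0..<t]"

text \<open>Auxiliary random variables W, Y are discrete; they are given values in nat
  (every discrete random variable has countable support, so this is w.l.o.g.).\<close>

definition admissible :: "('a list \<Rightarrow> 'b pmf) \<Rightarrow> ('a list \<Rightarrow> 'c pmf) \<Rightarrow> bool" where
  "admissible Z Zs \<longleftrightarrow>
     \<comment> \<open>(1)\<close>
     (\<exists>c>0. \<forall>P. is_process P \<longrightarrow> (\<forall>n\<ge>1.
        entropy_pmf (bind_pmf (xpre P n) Zs) \<le> ennreal (c * real n)))
   \<and> \<comment> \<open>(2)\<close>
     (\<forall>P. is_process P \<longrightarrow> info_rate Z P = info_rate Zs P)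
   \<and> \<comment> \<open>(3)\<close>
     (\<forall>P. is_process P \<longrightarrow> (\<forall>m n. 1 \<le> m \<and> m \<le> n \<longrightarrow>
        markov (chan_joint Zs (xpre P n) [(0, m), (m, n), (0, n)])
          fst (\<lambda>(x, zs). (zs ! 0, zs ! 1)) (\<lambda>(x, zs). zs ! 2)))
   \<and> \<comment> \<open>(4a)\<close>
     (\<forall>\<tau>::nat. \<tau> \<ge> 1 \<longrightarrow> (\<exists>\<gamma> :: nat \<Rightarrow> real.
        mono \<gamma> \<and> \<gamma> \<in> o(\<lambda>m. real m) \<and> summable (\<lambda>m. \<gamma> m / (real m)\<^sup>2) \<and>
        (\<forall>P. is_process P \<longrightarrow> (\<forall>n\<ge>\<tau>.
           (\<exists>\<nu> :: ('a list \<times> 'c list \<times> nat) pmf.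
              map_pmf (\<lambda>(x, zs, w). (x, zs)) \<nu> = chan_joint Zs (xpre P n) [(0, n), (0, \<tau>), (\<tau>, n)]
            \<and> markov \<nu> fst (\<lambda>(x, zs, w). (zs ! 0, w)) (\<lambda>(x, zs, w). (zs ! 1, zs ! 2))
            \<and> entropy_pmf (map_pmf (\<lambda>(x, zs, w). w) \<nu>) \<le> ennreal (\<gamma> n))
         \<and> (\<exists>\<nu> :: ('a list \<times> 'c list \<times> nat) pmf.
              map_pmf (\<lambda>(x, zs, w). (x, zs)) \<nu>
                = chan_joint Zs (xpre P n) [(0, n), (0, n - \<tau>), (n - \<tau>, n)]
            \<and> markov \<nu> fst (\<lambda>(x, zs, w). (zs ! 0, w)) (\<lambda>(x, zs, w). (zs ! 1, zs ! 2))
            \<and> entropy_pmf (map_pmf (\<lambda>(x, zs, w). w) \<nu>) \<le> ennreal (\<gamma> n))))))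
   \<and> \<comment> \<open>(4b)\<close>
     (\<exists>\<alpha> :: nat \<Rightarrow> real. \<alpha> \<in> o(\<lambda>m. real m) \<and>
        (\<forall>P. is_process P \<longrightarrow> (\<forall>b t. b \<ge> 1 \<and> t \<ge> 1 \<longrightarrow>
           (\<exists>\<nu> :: ('a list \<times> 'c list \<times> nat) pmf.
              map_pmf (\<lambda>(x, zs, w). (x, zs)) \<nu>
                = chan_joint Zs (xpre P (t * b)) ((0, t * b) # blocks b t)
            \<and> markov \<nu> fst (\<lambda>(x, zs, w). (hd zs, w)) (\<lambda>(x, zs, w). tl zs)
            \<and> entropy_pmf (map_pmf (\<lambda>(x, zs, w). w) \<nu>) \<le> ennreal (real t * \<alpha> b)))))
   \<and> \<comment> \<open>(5)\<close>
     (\<exists>\<beta> :: nat \<Rightarrow> real. \<beta> \<in> o(\<lambda>m. real m) \<and>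
        (\<forall>P. is_process P \<longrightarrow> (\<forall>b t. b \<ge> 1 \<and> t \<ge> 1 \<longrightarrow>
           (\<exists>(\<nu> :: ('a list \<times> 'c list \<times> nat) pmf) (\<phi> :: 'c list \<Rightarrow> nat \<Rightarrow> 'c).
              map_pmf (\<lambda>(x, zs, y). (x, zs)) \<nu>
                = chan_joint Zs (xpre P (t * b)) (blocks b t @ [(0, t * b)])
            \<and> markov \<nu> fst (\<lambda>(x, zs, y). take t zs) (\<lambda>(x, zs, y). y)
            \<and> (\<forall>(x, zs, y) \<in> set_pmf \<nu>. zs ! t = \<phi> (take t zs) y)
            \<and> (\<forall>z. let S = {(u, y). (u, y) \<in> (\<lambda>(x, zs, y). (take t zs, y)) ` set_pmf \<nu>
                                   \<and> \<phi> u y = z}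
                   in finite S \<and> (S \<noteq> {} \<longrightarrow> log 2 (real (card S)) \<le> real t * \<beta> b))))))"

end

theory Submission
  imports Defs
begin


definition phi :: "real \<Rightarrow> real \<Rightarrow> ennreal" where
  "phi a b = (if a = 0 then ennreal b else if b = 0 then \<top> else ennreal (a * ln (a / b) - a + b))"

lemma phi_real_nonneg:
  fixes a b :: real assumes "a > 0" "b > 0" shows "0 \<le> a * ln (a / b) - a + b"
proof -
  have "ln (b / a) \<le> b / a - 1" using assms by (intro ln_le_minus_one) auto
  hence "a * ln (b / a) \<le> a * (b / a - 1)" using assms by (intro mult_left_mono) auto
  moreover have "ln (b / a) = - ln (a / b)" using assms by (simp add: ln_div)
  moreover have "a * (b / a - 1) = b - a" using assms by (simp add: field_simps)
  ultimately show ?thesis by simp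
qed

lemma phi_hom:
  fixes a b c :: real assumes "c \<ge> 0" "a \<ge> 0" "b \<ge> 0"
  shows "phi (c * a) (c * b) = ennreal c * phi a b"
proof (cases "c = 0")
  case True thus ?thesis by (simp add: phi_def)
next
  case False
  hence c: "c > 0" using assms by simp
  show ?thesis
  proof (cases "a = 0")
    case True thus ?thesis using c assms by (simp add: phi_def ennreal_mult)
  next
    case a: False
    show ?thesis
    proof (cases "b = 0")
      case True thus ?thesis using c a by (simp add: phi_def ennreal_mult_top)
    next
      case False
      have "c * a * ln (c * a / (c * b)) - c * a + c * b = c * (a * ln (a / b) - a + b)"
        using c by (simp add: algebra_simps)
      thus ?thesis using c a False assms phi_real_nonneg[of a b]
        by (simp add: phi_def ennreal_mult)
    qed
  qed
qed

lemma phi_lin: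
  fixes a b t :: real assumes "a \<ge> 0" "b \<ge> 0" "phi a b \<noteq> \<top>"
  shows "a * t - b * (exp t - 1) \<le> enn2real (phi a b)"
proof (cases "a = 0")
  case True thus ?thesis using assms mult_nonneg_nonneg[of b "exp t"] by (simp add: phi_def algebra_simps)
next
  case a: False
  hence b: "b \<noteq> 0" using assms by (auto simp: phi_def)
  have ap: "a > 0" "b > 0" using a b assms by auto
  define s where "s = t - ln (a / b)"
  have "b * exp t = a * exp s" using ap by (simp add: s_def exp_diff)
  moreover have "1 + s \<le> exp s" by simp
  hence "a * (1 + s) \<le> a * exp s" using ap by (intro mult_left_mono) auto
  ultimately have "a * t - b * (exp t - 1) \<le> a * ln (a / b) - a + b"
    by (simp add: s_def algebra_simps)
  thus ?thesis using ap phi_real_nonneg[of a b] by (simp add: phi_def)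
qed

lemma phi_sum:
  fixes a b :: "'i \<Rightarrow> real"
  assumes a0: "\<And>i. a i \<ge> 0" and b0: "\<And>i. b i \<ge> 0"
    and A: "(\<integral>\<^sup>+ i. ennreal (a i) \<partial>count_space UNIV) = ennreal A"
    and B: "(\<integral>\<^sup>+ i. ennreal (b i) \<partial>count_space UNIV) = ennreal B"
    and A0: "A \<ge> 0" and B0: "B \<ge> 0"
  shows "phi A B \<le> (\<integral>\<^sup>+ i. phi (a i) (b i) \<partial>count_space UNIV)"
proof (cases "A = 0")
  case True
  hence "\<forall>i. a i = 0" using A a0 by (simp add: nn_integral_0_iff_AE AE_count_space)
  hence "(\<integral>\<^sup>+ i. phi (a i) (b i) \<partial>count_space UNIV) = ennreal B"
    using B by (simp add: phi_def)
  thus ?thesis using True by (simp add: phi_def)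
next
  case Anz: False
  show ?thesis
  proof (cases "B = 0")
    case True
    hence bz: "\<forall>i. b i = 0" using B b0 by (simp add: nn_integral_0_iff_AE AE_count_space)
    have "\<exists>i. a i \<noteq> 0"
    proof (rule ccontr)
      assume "\<not> ?thesis" hence "\<forall>i. a i = 0" by auto
      hence "ennreal A = 0" using A by simp
      thus False using Anz A0 by simp
    qed
    then obtain i where "a i \<noteq> 0" by auto
    hence "phi (a i) (b i) = \<top>" using bz by (simp add: phi_def)
    moreover have "phi (a i) (b i) \<le> (\<integral>\<^sup>+ i. phi (a i) (b i) \<partial>count_space UNIV)"
      by (rule nn_integral_ge_point) simp
    ultimately show ?thesis by (simp add: top_unique)
  next
    case Bnz: False
    let ?R = "(\<integral>\<^sup>+ i. phi (a i) (b i) \<partial>count_space UNIV)"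
    show ?thesis
    proof (cases "?R = \<top>")
      case True thus ?thesis by simp
    next
      case Rfin: False
      have fin: "phi (a i) (b i) \<noteq> \<top>" for i
        using nn_integral_ge_point[of i UNIV "\<lambda>i. phi (a i) (b i)"] Rfin by (auto simp: top_unique)
      define g where "g i = enn2real (phi (a i) (b i))" for i
      have g: "phi (a i) (b i) = ennreal (g i)" for i using fin[of i] by (simp add: g_def ennreal_enn2real top.not_eq_extremum)
      have g0: "g i \<ge> 0" for i by (simp add: g_def)
      have intg: "integrable (count_space UNIV) g"
        by (rule integrableI_nonneg) (use Rfin g g0 in \<open>auto simp: top.not_eq_extremum\<close>)
      have inta: "integrable (count_space UNIV) a"
        by (rule integrableI_nonneg) (use A a0 in auto)
      have intb: "integrable (count_space UNIV) b"
        by (rule integrableI_nonneg) (use B b0 in auto)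
      have IA: "integral\<^sup>L (count_space UNIV) a = A"
        using integral_eq_nn_integral[of a "count_space UNIV"] A a0 A0 by simp
      have IB: "integral\<^sup>L (count_space UNIV) b = B"
        using integral_eq_nn_integral[of b "count_space UNIV"] B b0 B0 by simp
      have IG: "integral\<^sup>L (count_space UNIV) g = enn2real ?R"
        using integral_eq_nn_integral[of g "count_space UNIV"] g g0 by simp
      define t where "t = ln (A / B)"
      have "(\<integral>i. a i * t - b i * (exp t - 1) \<partial>count_space UNIV) \<le> integral\<^sup>L (count_space UNIV) g"
        by (rule integral_mono) (use inta intb intg phi_lin[OF a0 b0 fin] in \<open>auto simp: g_def\<close>)
      moreover have "(\<integral>i. a i * t - b i * (exp t - 1) \<partial>count_space UNIV) = A * t - B * (exp t - 1)"
        using inta intb IA IB by simp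
      moreover have "A * t - B * (exp t - 1) = A * ln (A / B) - A + B"
        using Anz Bnz A0 B0 by (simp add: t_def algebra_simps)
      ultimately have "A * ln (A / B) - A + B \<le> enn2real ?R" using IG by simp
      hence "ennreal (A * ln (A / B) - A + B) \<le> ?R"
        using Rfin by (metis ennreal_enn2real ennreal_leI top.not_eq_extremum)
      thus ?thesis using Anz Bnz by (simp add: phi_def)
    qed
  qed
qed

lemma nn_swap_count:
  fixes f :: "'i \<Rightarrow> 'z \<Rightarrow> ennreal"
  shows "(\<integral>\<^sup>+ z. \<integral>\<^sup>+ i. f i z \<partial>count_space UNIV \<partial>count_space UNIV)
       = (\<integral>\<^sup>+ i. \<integral>\<^sup>+ z. f i z \<partial>count_space UNIV \<partial>count_space UNIV)"
  using nn_integral_snd_count_space[of "\<lambda>(i, z). f i z"] nn_integral_fst_count_space[of "\<lambda>(i, z). f i z"]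
  by simp

lemma ennreal_pmf_bind_count:
  "ennreal (pmf (bind_pmf k T) z) = (\<integral>\<^sup>+ i. ennreal (pmf k i * pmf (T i) z) \<partial>count_space UNIV)"
  by (simp add: ennreal_pmf_bind nn_integral_measure_pmf ennreal_mult')

lemma nn_integral_pmf_UNIV: "(\<integral>\<^sup>+ z. ennreal (pmf p z) \<partial>count_space UNIV) = 1"
  by (simp add: nn_integral_pmf measure_pmf.emeasure_space_1[simplified])

definition Dn :: "'b pmf \<Rightarrow> 'b pmf \<Rightarrow> ennreal" where
  "Dn k r = (\<integral>\<^sup>+ y. phi (pmf k y) (pmf r y) \<partial>count_space UNIV)"

lemma Dn_bind: "Dn (bind_pmf k T) (bind_pmf r T) \<le> Dn k r"
proof -
  have "Dn (bind_pmf k T) (bind_pmf r T) \<le>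
     (\<integral>\<^sup>+ z. \<integral>\<^sup>+ i. phi (pmf k i * pmf (T i) z) (pmf r i * pmf (T i) z) \<partial>count_space UNIV \<partial>count_space UNIV)"
    unfolding Dn_def
    by (intro nn_integral_mono phi_sum ennreal_pmf_bind_count[symmetric]) auto
  also have "\<dots> = (\<integral>\<^sup>+ z. \<integral>\<^sup>+ i. phi (pmf k i) (pmf r i) * ennreal (pmf (T i) z) \<partial>count_space UNIV \<partial>count_space UNIV)"
    using phi_hom[of "pmf (T _) _" "pmf k _" "pmf r _"]
    by (intro nn_integral_cong) (simp add: mult.commute)
  also have "\<dots> = (\<integral>\<^sup>+ i. \<integral>\<^sup>+ z. phi (pmf k i) (pmf r i) * ennreal (pmf (T i) z) \<partial>count_space UNIV \<partial>count_space UNIV)"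
    by (rule nn_swap_count)
  also have "\<dots> = Dn k r"
    unfolding Dn_def by (simp add: nn_integral_cmult nn_integral_pmf_UNIV)
  finally show ?thesis .
qed

lemma integral_pmf_UNIV: "(\<integral>x. pmf M x \<partial>count_space UNIV) = 1"
  by (simp add: integral_pmf)

lemma Dn_slice:
  fixes \<alpha> \<beta> :: real assumes al: "\<alpha> \<ge> 0" and be: "\<beta> \<ge> 0"
  shows "(\<integral>\<^sup>+ y. phi (\<alpha> * pmf k y) (\<beta> * pmf q y) \<partial>count_space UNIV) \<le> phi \<alpha> \<beta> + ennreal \<alpha> * Dn k q"
proof (cases "\<alpha> = 0")
  case True
  have "(\<integral>\<^sup>+ y. phi (\<alpha> * pmf k y) (\<beta> * pmf q y) \<partial>count_space UNIV)
      = (\<integral>\<^sup>+ y. ennreal \<beta> * ennreal (pmf q y) \<partial>count_space UNIV)"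
    using True be by (intro nn_integral_cong) (simp add: phi_def ennreal_mult)
  also have "\<dots> = ennreal \<beta>" by (simp add: nn_integral_cmult nn_integral_pmf_UNIV)
  finally show ?thesis using True by (simp add: phi_def)
next
  case anz: False
  hence ap: "\<alpha> > 0" using al by simp
  show ?thesis
  proof (cases "\<beta> = 0 \<or> Dn k q = \<top>")
    case True
    thus ?thesis using ap by (auto simp: phi_def ennreal_mult_top)
  next
    case False
    hence bp: "\<beta> > 0" and Dfin: "Dn k q \<noteq> \<top>" using be by auto
    have fin: "phi (pmf k y) (pmf q y) \<noteq> \<top>" for y
      using nn_integral_ge_point[of y UNIV "\<lambda>y. phi (pmf k y) (pmf q y)"] Dfin
      by (auto simp: Dn_def top_unique)
    define g where "g y = enn2real (phi (pmf k y) (pmf q y))" for y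
    have g: "phi (pmf k y) (pmf q y) = ennreal (g y)" for y
      using fin[of y] by (simp add: g_def ennreal_enn2real top.not_eq_extremum)
    have g0: "g y \<ge> 0" for y by (simp add: g_def)
    have intg: "integrable (count_space UNIV) g"
      by (rule integrableI_nonneg) (use Dfin g g0 in \<open>auto simp: Dn_def top.not_eq_extremum\<close>)
    have IG: "integral\<^sup>L (count_space UNIV) g = enn2real (Dn k q)"
      using integral_eq_nn_integral[of g "count_space UNIV"] g g0 by (simp add: Dn_def)
    define h where "h y = \<alpha> * g y + \<alpha> * pmf k y * ln (\<alpha> / \<beta>) + (\<beta> - \<alpha>) * pmf q y" for y
    have ph: "phi (\<alpha> * pmf k y) (\<beta> * pmf q y) = ennreal (h y)" and h0: "h y \<ge> 0" for y
    proof -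
      have "phi (\<alpha> * pmf k y) (\<beta> * pmf q y) = ennreal (h y) \<and> h y \<ge> 0"
      proof (cases "pmf k y = 0")
        case True
        hence "g y = pmf q y" by (simp add: g_def phi_def)
        thus ?thesis using True ap bp by (simp add: h_def phi_def algebra_simps)
      next
        case kz: False
        hence qz: "pmf q y \<noteq> 0" using fin[of y] by (auto simp: phi_def)
        have kp: "pmf k y > 0" and qp: "pmf q y > 0" using kz qz by (auto simp: less_le)
        have gy: "g y = pmf k y * ln (pmf k y / pmf q y) - pmf k y + pmf q y"
          using kz qz phi_real_nonneg[OF kp qp] by (simp add: g_def phi_def)
        have "ln (\<alpha> * pmf k y / (\<beta> * pmf q y)) = ln (\<alpha> / \<beta>) + ln (pmf k y / pmf q y)"
          using ap bp kp qp by (simp add: ln_div ln_mult)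
        hence eq: "\<alpha> * pmf k y * ln (\<alpha> * pmf k y / (\<beta> * pmf q y)) - \<alpha> * pmf k y + \<beta> * pmf q y = h y"
          by (simp add: h_def gy algebra_simps)
        have "0 \<le> \<alpha> * pmf k y * ln (\<alpha> * pmf k y / (\<beta> * pmf q y)) - \<alpha> * pmf k y + \<beta> * pmf q y"
          using phi_real_nonneg[of "\<alpha> * pmf k y" "\<beta> * pmf q y"] ap bp kp qp by simp
        thus ?thesis using eq ap bp kz qz by (simp add: phi_def)
      qed
      thus "phi (\<alpha> * pmf k y) (\<beta> * pmf q y) = ennreal (h y)" "h y \<ge> 0" by auto
    qed
    have inth: "integrable (count_space UNIV) h"
      unfolding h_def using intg integrable_pmf[of UNIV k] integrable_pmf[of UNIV q] by auto
    have "(\<integral>\<^sup>+ y. phi (\<alpha> * pmf k y) (\<beta> * pmf q y) \<partial>count_space UNIV) = ennreal (integral\<^sup>L (count_space UNIV) h)"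
      using nn_integral_eq_integral[OF inth] h0 ph by simp
    also have "integral\<^sup>L (count_space UNIV) h = \<alpha> * enn2real (Dn k q) + (\<alpha> * ln (\<alpha> / \<beta>) - \<alpha> + \<beta>)"
      unfolding h_def using intg integrable_pmf[of UNIV k] integrable_pmf[of UNIV q] IG
      by (simp add: integral_pmf_UNIV algebra_simps)
    also have "ennreal \<dots> = ennreal \<alpha> * Dn k q + phi \<alpha> \<beta>"
    proof -
      have "ennreal (\<alpha> * enn2real (Dn k q) + (\<alpha> * ln (\<alpha> / \<beta>) - \<alpha> + \<beta>))
          = ennreal (\<alpha> * enn2real (Dn k q)) + ennreal (\<alpha> * ln (\<alpha> / \<beta>) - \<alpha> + \<beta>)"
        using ap phi_real_nonneg[OF ap bp] by (intro ennreal_plus) auto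
      also have "ennreal (\<alpha> * enn2real (Dn k q)) = ennreal \<alpha> * Dn k q"
        using ap Dfin by (simp add: ennreal_mult ennreal_enn2real top.not_eq_extremum)
      finally show ?thesis using ap bp by (simp add: phi_def)
    qed
    finally show ?thesis by (simp add: add.commute)
  qed
qed

lemma Dn_pair: "Dn (pair_pmf k1 k2) (pair_pmf q1 q2) \<le> Dn k1 q1 + Dn k2 q2"
proof -
  have "Dn (pair_pmf k1 k2) (pair_pmf q1 q2) =
     (\<integral>\<^sup>+ a. \<integral>\<^sup>+ b. phi (pmf k1 a * pmf k2 b) (pmf q1 a * pmf q2 b) \<partial>count_space UNIV \<partial>count_space UNIV)"
    unfolding Dn_def
    apply (subst nn_integral_fst_count_space[of "\<lambda>(a, b). phi (pmf k1 a * pmf k2 b) (pmf q1 a * pmf q2 b)", simplified])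
    by (intro nn_integral_cong) (auto simp: pmf_pair split: prod.splits)
  also have "\<dots> \<le> (\<integral>\<^sup>+ a. phi (pmf k1 a) (pmf q1 a) + ennreal (pmf k1 a) * Dn k2 q2 \<partial>count_space UNIV)"
    by (intro nn_integral_mono Dn_slice) auto
  also have "\<dots> = Dn k1 q1 + Dn k2 q2"
    by (simp add: nn_integral_add nn_integral_multc Dn_def nn_integral_pmf_UNIV)
  finally show ?thesis .
qed

lemma phi_pos2: fixes k c :: real shows "c > 0 \<Longrightarrow> k \<ge> 0 \<Longrightarrow> phi k c = ennreal (k * ln (k / c) - k + c)"
  by (simp add: phi_def)

lemma phi_pos2_nonneg: fixes k c :: real shows "c > 0 \<Longrightarrow> k \<ge> 0 \<Longrightarrow> 0 \<le> k * ln (k / c) - k + c"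
  using phi_real_nonneg[of k c] by (cases "k = 0") auto

lemma gibbs_fin:
  fixes p k :: "'x \<Rightarrow> real"
  assumes S: "finite S" and p: "\<And>x. x \<in> S \<Longrightarrow> p x > 0" and ps: "(\<Sum>x\<in>S. p x) = 1"
    and k: "\<And>x. k x \<ge> 0" and R: "R \<ge> 0" and Q: "Q = (\<Sum>x\<in>S. p x * k x)"
  shows "(\<Sum>x\<in>S. ennreal (p x) * phi (k x) Q) \<le> (\<Sum>x\<in>S. ennreal (p x) * phi (k x) R)"
proof (cases "\<exists>x\<in>S. k x > 0")
  case False
  hence "\<forall>x\<in>S. k x = 0" using k by (metis antisym not_less)
  hence "Q = 0" using Q by simp
  with \<open>\<forall>x\<in>S. k x = 0\<close> have "(\<Sum>x\<in>S. ennreal (p x) * phi (k x) Q) = 0"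
    by (simp add: phi_def)
  thus ?thesis by simp
next
  case True
  then obtain x0 where x0: "x0 \<in> S" "k x0 > 0" by auto
  have Qp: "Q > 0"
  proof -
    have "p x0 * k x0 > 0" using x0 p by simp
    also have "p x0 * k x0 \<le> Q" unfolding Q
      using S x0 p k by (intro member_le_sum) (auto, metis less_imp_le mult_nonneg_nonneg)
    finally show ?thesis .
  qed
  show ?thesis
  proof (cases "R = 0")
    case True
    have "ennreal (p x0) * phi (k x0) R = \<top>" using True x0 p[OF x0(1)] by (simp add: phi_def ennreal_mult_top)
    moreover have "ennreal (p x0) * phi (k x0) R \<le> (\<Sum>x\<in>S. ennreal (p x) * phi (k x) R)"
      using S x0 by (intro member_le_sum) auto
    ultimately show ?thesis by (simp add: top_unique)
  next
    case False
    hence Rp: "R > 0" using R by simp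
    have trm: "p x * (k x * ln (k x / R) - k x + R) = p x * (k x * ln (k x / Q) - k x + Q) + p x * k x * ln (Q / R) + p x * (R - Q)" for x
    proof (cases "k x = 0")
      case True thus ?thesis by (simp add: algebra_simps)
    next
      case False
      hence "k x > 0" using k[of x] by simp
      hence "ln (k x / R) = ln (k x / Q) + ln (Q / R)" using Qp Rp by (simp add: ln_div)
      thus ?thesis by (simp add: algebra_simps)
    qed
    have "(\<Sum>x\<in>S. p x * (k x * ln (k x / R) - k x + R))
       = (\<Sum>x\<in>S. p x * (k x * ln (k x / Q) - k x + Q)) + Q * ln (Q / R) + (R - Q)"
      unfolding trm sum.distrib Q using ps by (simp add: sum_distrib_right[symmetric] sum_distrib_left[symmetric])
    hence le: "(\<Sum>x\<in>S. p x * (k x * ln (k x / Q) - k x + Q)) \<le> (\<Sum>x\<in>S. p x * (k x * ln (k x / R) - k x + R))"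
      using phi_real_nonneg[OF Qp Rp] by simp
    have conv: "(\<Sum>x\<in>S. ennreal (p x) * phi (k x) c) = ennreal (\<Sum>x\<in>S. p x * (k x * ln (k x / c) - k x + c))"
      if "c > 0" for c
    proof -
      have "(\<Sum>x\<in>S. ennreal (p x) * phi (k x) c) = (\<Sum>x\<in>S. ennreal (p x * (k x * ln (k x / c) - k x + c)))"
        using that k p phi_pos2_nonneg[OF that k] by (intro sum.cong refl) (simp add: phi_pos2 ennreal_mult less_imp_le)
      also have "\<dots> = ennreal (\<Sum>x\<in>S. p x * (k x * ln (k x / c) - k x + c))"
        by (intro sum_ennreal) (metis less_imp_le mult_nonneg_nonneg phi_pos2_nonneg that k p)
      finally show ?thesis .
    qed
    show ?thesis using conv[OF Qp] conv[OF Rp] le by (simp add: ennreal_leI)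
  qed
qed

definition MIK :: "'x pmf \<Rightarrow> ('x \<Rightarrow> 'y pmf) \<Rightarrow> ennreal" where
  "MIK \<mu> K = (\<integral>\<^sup>+ x. Dn (K x) (bind_pmf \<mu> K) \<partial>measure_pmf \<mu>)"

lemma pmf_bind_fin:
  assumes "finite (set_pmf \<mu>)"
  shows "pmf (bind_pmf \<mu> K) y = (\<Sum>x\<in>set_pmf \<mu>. pmf \<mu> x * pmf (K x) y)"
  unfolding pmf_bind using assms by (subst integral_measure_pmf_real[where A="set_pmf \<mu>"]) (auto simp: mult.commute)

lemma MIK_le:
  assumes fin: "finite (set_pmf \<mu>)"
  shows "MIK \<mu> K \<le> (\<integral>\<^sup>+ x. Dn (K x) R \<partial>measure_pmf \<mu>)"
proof -
  let ?S = "set_pmf \<mu>"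
  let ?Q = "bind_pmf \<mu> K"
  have "MIK \<mu> K = (\<Sum>x\<in>?S. Dn (K x) ?Q * pmf \<mu> x)"
    unfolding MIK_def using fin by (simp add: nn_integral_measure_pmf_finite)
  also have "\<dots> = (\<integral>\<^sup>+ y. (\<Sum>x\<in>?S. ennreal (pmf \<mu> x) * phi (pmf (K x) y) (pmf ?Q y)) \<partial>count_space UNIV)"
    unfolding Dn_def by (subst nn_integral_sum) (auto simp: nn_integral_cmult mult.commute)
  also have "\<dots> \<le> (\<integral>\<^sup>+ y. (\<Sum>x\<in>?S. ennreal (pmf \<mu> x) * phi (pmf (K x) y) (pmf R y)) \<partial>count_space UNIV)"
    by (intro nn_integral_mono gibbs_fin fin pmf_bind_fin) (auto simp: set_pmf_iff sum_pmf_eq_1[OF fin order_refl] less_le)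
  also have "\<dots> = (\<Sum>x\<in>?S. Dn (K x) R * pmf \<mu> x)"
    unfolding Dn_def by (subst nn_integral_sum) (auto simp: nn_integral_cmult mult.commute)
  also have "\<dots> = (\<integral>\<^sup>+ x. Dn (K x) R \<partial>measure_pmf \<mu>)"
    using fin by (simp add: nn_integral_measure_pmf_finite)
  finally show ?thesis .
qed

lemma MIK_pair:
  assumes fin: "finite (set_pmf \<mu>)"
  shows "MIK \<mu> (\<lambda>x. pair_pmf (K1 x) (K2 x)) \<le> MIK \<mu> K1 + MIK \<mu> K2"
proof -
  have "MIK \<mu> (\<lambda>x. pair_pmf (K1 x) (K2 x)) \<le>
     (\<integral>\<^sup>+ x. Dn (pair_pmf (K1 x) (K2 x)) (pair_pmf (bind_pmf \<mu> K1) (bind_pmf \<mu> K2)) \<partial>measure_pmf \<mu>)"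
    by (rule MIK_le[OF fin])
  also have "\<dots> \<le> (\<integral>\<^sup>+ x. Dn (K1 x) (bind_pmf \<mu> K1) + Dn (K2 x) (bind_pmf \<mu> K2) \<partial>measure_pmf \<mu>)"
    by (intro nn_integral_mono Dn_pair)
  also have "\<dots> = MIK \<mu> K1 + MIK \<mu> K2"
    unfolding MIK_def by (simp add: nn_integral_add)
  finally show ?thesis .
qed

lemma MIK_cong:
  assumes "\<And>x. x \<in> set_pmf \<mu> \<Longrightarrow> K x = K' x"
  shows "MIK \<mu> K = MIK \<mu> K'"
proof -
  have "bind_pmf \<mu> K = bind_pmf \<mu> K'" using assms by (intro bind_pmf_cong) auto
  thus ?thesis unfolding MIK_def using assms
    by (intro nn_integral_cong_AE) (auto simp: AE_measure_pmf_iff)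
qed

lemma MIK_dp:
  assumes "\<And>x. x \<in> set_pmf \<mu> \<Longrightarrow> K3 x = bind_pmf (K12 x) T"
  shows "MIK \<mu> K3 \<le> MIK \<mu> K12"
proof -
  have "MIK \<mu> K3 = MIK \<mu> (\<lambda>x. bind_pmf (K12 x) T)" using assms by (rule MIK_cong)
  also have "\<dots> = (\<integral>\<^sup>+ x. Dn (bind_pmf (K12 x) T) (bind_pmf (bind_pmf \<mu> K12) T) \<partial>measure_pmf \<mu>)"
    unfolding MIK_def by (simp add: bind_assoc_pmf)
  also have "\<dots> \<le> MIK \<mu> K12" unfolding MIK_def by (intro nn_integral_mono Dn_bind)
  finally show ?thesis .
qed

lemma MIK_map: "MIK \<mu> (\<lambda>x. K (f x)) = MIK (map_pmf f \<mu>) K"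
  unfolding MIK_def by (simp add: bind_map_pmf)

lemma pmf_io_joint: "pmf (io_joint K \<mu>) (x, z) = pmf \<mu> x * pmf (K x) z"
proof -
  have "pmf (io_joint K \<mu>) (x, z) = (\<integral>x'. pmf (map_pmf (Pair x') (K x')) (x, z) \<partial>measure_pmf \<mu>)"
    unfolding io_joint_def pmf_bind by simp
  also have "\<dots> = (\<Sum>a\<in>{x}. pmf (map_pmf (Pair a) (K a)) (x, z) * pmf \<mu> a)"
  proof (rule integral_measure_pmf_real)
    fix a assume "a \<in> set_pmf \<mu>" "pmf (map_pmf (Pair a) (K a)) (x, z) \<noteq> 0"
    hence "(x, z) \<in> set_pmf (map_pmf (Pair a) (K a))" by (metis set_pmf_iff)
    thus "a \<in> {x}" by auto
  qed simp
  also have "\<dots> = pmf \<mu> x * pmf (K x) z"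
    using pmf_map_inj'[of "Pair x" "K x" z] by (simp add: inj_on_def)
  finally show ?thesis .
qed

lemma io_joint_fst: "map_pmf fst (io_joint K \<mu>) = \<mu>"
  unfolding io_joint_def by (simp add: map_bind_pmf map_pmf_comp bind_return_pmf')

lemma io_joint_snd: "map_pmf snd (io_joint K \<mu>) = bind_pmf \<mu> K"
  unfolding io_joint_def by (simp add: map_bind_pmf map_pmf_comp)

lemma pmf_le_bind: "pmf \<mu> x * pmf (K x) y \<le> pmf (bind_pmf \<mu> K) y"
proof -
  have "ennreal (pmf \<mu> x * pmf (K x) y) \<le> ennreal (pmf (bind_pmf \<mu> K) y)"
    unfolding ennreal_pmf_bind_count[of \<mu> K y]
    by (rule nn_integral_ge_point[where p="\<lambda>i. ennreal (pmf \<mu> i * pmf (K i) y)"]) simp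
  thus ?thesis by (simp add: ennreal_le_iff)
qed

lemma MIK_iter: "MIK \<mu> K = (\<integral>\<^sup>+ x. \<integral>\<^sup>+ y. ennreal (pmf \<mu> x) * phi (pmf (K x) y) (pmf (bind_pmf \<mu> K) y)
     \<partial>count_space UNIV \<partial>count_space UNIV)"
  unfolding MIK_def Dn_def nn_integral_measure_pmf by (simp add: nn_integral_cmult)

lemma MIK_entropy: "MIK \<mu> K \<le> ennreal (ln 2) * entropy_pmf (bind_pmf \<mu> K) + 1"
proof -
  define Q where "Q = bind_pmf \<mu> K"
  let ?A = "\<lambda>x y. ennreal (pmf \<mu> x * pmf (K x) y) * ennreal (- ln (pmf Q y))"
  let ?B = "\<lambda>x y. ennreal (pmf \<mu> x) * ennreal (pmf Q y)"
  have pt: "ennreal (pmf \<mu> x) * phi (pmf (K x) y) (pmf Q y) \<le> ?A x y + ?B x y" for x y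
  proof (cases "pmf \<mu> x = 0 \<or> pmf (K x) y = 0")
    case True thus ?thesis
      by (auto simp: phi_def)
  next
    case False
    hence mp: "pmf \<mu> x > 0" and kp: "pmf (K x) y > 0" by (auto simp: less_le)
    have "pmf Q y \<ge> pmf \<mu> x * pmf (K x) y" unfolding Q_def by (rule pmf_le_bind)
    hence qp: "pmf Q y > 0" using mp kp by (meson less_le_trans mult_pos_pos)
    have q1: "pmf Q y \<le> 1" by (rule pmf_le_1)
    have k1: "pmf (K x) y \<le> 1" by (rule pmf_le_1)
    have lnq: "- ln (pmf Q y) \<ge> 0" using qp q1 by simp
    have "ln (pmf (K x) y) \<le> 0" using kp k1 by simp
    hence "pmf (K x) y * ln (pmf (K x) y) \<le> 0" using kp by (simp add: mult_nonneg_nonpos)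
    hence "pmf (K x) y * ln (pmf (K x) y / pmf Q y) \<le> pmf (K x) y * (- ln (pmf Q y))"
      using kp qp by (simp add: ln_div algebra_simps)
    hence le: "pmf (K x) y * ln (pmf (K x) y / pmf Q y) - pmf (K x) y + pmf Q y \<le> pmf (K x) y * (- ln (pmf Q y)) + pmf Q y"
      using kp by simp
    have "ennreal (pmf \<mu> x) * phi (pmf (K x) y) (pmf Q y)
        = ennreal (pmf \<mu> x * (pmf (K x) y * ln (pmf (K x) y / pmf Q y) - pmf (K x) y + pmf Q y))"
      using qp kp phi_real_nonneg[OF kp qp] by (simp add: phi_def ennreal_mult)
    also have "\<dots> \<le> ennreal (pmf \<mu> x * (pmf (K x) y * (- ln (pmf Q y)) + pmf Q y))"
      using le mp by (intro ennreal_leI mult_left_mono) auto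
    also have "\<dots> = ennreal (pmf \<mu> x * pmf (K x) y * (- ln (pmf Q y))) + ennreal (pmf \<mu> x * pmf Q y)"
      using mp kp qp lnq
      by (subst ennreal_plus[symmetric]) (auto simp: algebra_simps intro!: mult_nonneg_nonneg mult_nonneg_nonpos)
    also have "\<dots> = ?A x y + ?B x y"
    proof -
      have "ennreal (pmf \<mu> x * pmf (K x) y * (- ln (pmf Q y))) = ?A x y"
        using mp kp lnq by (intro ennreal_mult) auto
      moreover have "ennreal (pmf \<mu> x * pmf Q y) = ?B x y"
        using mp qp by (intro ennreal_mult) auto
      ultimately show ?thesis by simp
    qed
    finally show ?thesis .
  qed
  have "MIK \<mu> K \<le> (\<integral>\<^sup>+ x. \<integral>\<^sup>+ y. ?A x y + ?B x y \<partial>count_space UNIV \<partial>count_space UNIV)"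
    unfolding MIK_iter Q_def[symmetric] by (intro nn_integral_mono pt)
  also have "\<dots> = (\<integral>\<^sup>+ x. \<integral>\<^sup>+ y. ?A x y \<partial>count_space UNIV \<partial>count_space UNIV)
      + (\<integral>\<^sup>+ x. \<integral>\<^sup>+ y. ?B x y \<partial>count_space UNIV \<partial>count_space UNIV)"
    by (simp add: nn_integral_add)
  also have "(\<integral>\<^sup>+ x. \<integral>\<^sup>+ y. ?B x y \<partial>count_space UNIV \<partial>count_space UNIV) = 1"
    by (simp add: nn_integral_cmult nn_integral_pmf_UNIV)
  also have "(\<integral>\<^sup>+ x. \<integral>\<^sup>+ y. ?A x y \<partial>count_space UNIV \<partial>count_space UNIV)
      = (\<integral>\<^sup>+ y. \<integral>\<^sup>+ x. ?A x y \<partial>count_space UNIV \<partial>count_space UNIV)"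
    by (rule nn_swap_count[symmetric])
  also have "\<dots> = (\<integral>\<^sup>+ y. ennreal (pmf Q y) * ennreal (- ln (pmf Q y)) \<partial>count_space UNIV)"
    by (simp add: nn_integral_multc ennreal_pmf_bind_count[symmetric] Q_def)
  also have "\<dots> = ennreal (ln 2) * entropy_pmf Q"
  proof -
    have "ennreal (pmf Q y) * ennreal (- ln (pmf Q y)) = ennreal (ln 2) * ennreal (- pmf Q y * log 2 (pmf Q y))" for y
    proof (cases "pmf Q y = 0")
      case True thus ?thesis by simp
    next
      case False
      hence qp: "pmf Q y > 0" by (simp add: less_le)
      have "- ln (pmf Q y) \<ge> 0" using qp pmf_le_1[of Q y] by simp
      hence "ennreal (pmf Q y) * ennreal (- ln (pmf Q y)) = ennreal (ln 2 * (- pmf Q y * log 2 (pmf Q y)))"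
        using qp by (simp add: ennreal_mult[symmetric] log_def)
      moreover have "ennreal (ln 2 * (- pmf Q y * log 2 (pmf Q y))) = ennreal (ln 2) * ennreal (- pmf Q y * log 2 (pmf Q y))"
        by (rule ennreal_mult') simp
      ultimately show ?thesis by simp
    qed
    thus ?thesis unfolding entropy_pmf_def by (simp add: nn_integral_cmult)
  qed
  finally show ?thesis by (simp add: Q_def)
qed

lemma mi_conv:
  assumes fin: "MIK \<mu> K \<noteq> \<top>"
  shows "mutual_info_pmf (io_joint K \<mu>) = enn2real (MIK \<mu> K) / ln 2"
proof -
  define Q where "Q = bind_pmf \<mu> K"
  define q where "q = io_joint K \<mu>"
  define G where "G p = ennreal (pmf \<mu> (fst p)) * phi (pmf (K (fst p)) (snd p)) (pmf Q (snd p))" for p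
  have MG: "MIK \<mu> K = (\<integral>\<^sup>+ p. G p \<partial>count_space UNIV)"
    unfolding MIK_iter G_def Q_def
    by (subst nn_integral_fst_count_space[symmetric]) simp
  have Gfin: "G p \<noteq> \<top>" for p
    using nn_integral_ge_point[of p UNIV G] fin MG by (auto simp: top_unique)
  define g where "g p = enn2real (G p)" for p
  have Gg: "G p = ennreal (g p)" for p using Gfin[of p] by (simp add: g_def ennreal_enn2real top.not_eq_extremum)
  have g0: "g p \<ge> 0" for p by (simp add: g_def)
  have intg: "integrable (count_space UNIV) g"
    by (rule integrableI_nonneg) (use fin MG Gg g0 in \<open>auto simp: top.not_eq_extremum\<close>)
  have IG: "integral\<^sup>L (count_space UNIV) g = enn2real (MIK \<mu> K)"
    using integral_eq_nn_integral[of g "count_space UNIV"] Gg g0 MG by simp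
  define f where "f = (\<lambda>(x, y). pmf q (x, y) * log 2 (pmf q (x, y) / (pmf (map_pmf fst q) x * pmf (map_pmf snd q) y)))"
  have feq: "f p = (g p + pmf q p - pmf (pair_pmf \<mu> Q) p) / ln 2" for p
  proof -
    obtain x y where p: "p = (x, y)" by (cases p)
    have fxy: "f p = pmf \<mu> x * pmf (K x) y * log 2 (pmf \<mu> x * pmf (K x) y / (pmf \<mu> x * pmf Q y))"
      by (simp add: f_def p q_def pmf_io_joint io_joint_fst io_joint_snd Q_def)
    show ?thesis
    proof (cases "pmf \<mu> x = 0")
      case True
      hence "g p = 0" by (simp add: g_def G_def p)
      thus ?thesis using True fxy by (simp add: p q_def pmf_io_joint pmf_pair)
    next
      case mnz: False
      hence mp: "pmf \<mu> x > 0" by (simp add: less_le)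
      show ?thesis
      proof (cases "pmf (K x) y = 0")
        case True
        hence "G p = ennreal (pmf \<mu> x * pmf Q y)"
          by (simp add: G_def p phi_def ennreal_mult)
        hence "g p = pmf \<mu> x * pmf Q y" by (simp add: g_def)
        thus ?thesis using True fxy by (simp add: p q_def pmf_io_joint pmf_pair)
      next
        case False
        hence kp: "pmf (K x) y > 0" by (simp add: less_le)
        have "pmf Q y \<ge> pmf \<mu> x * pmf (K x) y" unfolding Q_def by (rule pmf_le_bind)
        hence qp: "pmf Q y > 0" using mp kp by (meson less_le_trans mult_pos_pos)
        have "G p = ennreal (pmf \<mu> x * (pmf (K x) y * ln (pmf (K x) y / pmf Q y) - pmf (K x) y + pmf Q y))"
          using kp qp mp phi_real_nonneg[OF kp qp] by (simp add: G_def p phi_def ennreal_mult)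
        hence gp: "g p = pmf \<mu> x * (pmf (K x) y * ln (pmf (K x) y / pmf Q y) - pmf (K x) y + pmf Q y)"
          using kp qp mp phi_real_nonneg[OF kp qp] by (simp add: g_def)
        have "pmf \<mu> x * pmf (K x) y / (pmf \<mu> x * pmf Q y) = pmf (K x) y / pmf Q y"
          using mp by simp
        thus ?thesis using mp fxy gp
          by (simp add: p q_def pmf_io_joint pmf_pair log_def algebra_simps add_divide_distrib diff_divide_distrib)
      qed
    qed
  qed
  have intf: "integrable (count_space UNIV) f"
    unfolding feq using intg integrable_pmf[of UNIV q] integrable_pmf[of UNIV "pair_pmf \<mu> Q"] by simp
  have "mutual_info_pmf q = infsum f UNIV" unfolding mutual_info_pmf_def f_def ..
  also have "\<dots> = infsetsum f UNIV"
    using intf by (intro infsetsum_infsum[symmetric]) (simp add: abs_summable_on_def)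
  also have "\<dots> = integral\<^sup>L (count_space UNIV) f" by (simp add: infsetsum_def)
  also have "\<dots> = (integral\<^sup>L (count_space UNIV) g + 1 - 1) / ln 2"
    unfolding feq using intg integrable_pmf[of UNIV q] integrable_pmf[of UNIV "pair_pmf \<mu> Q"]
    by (simp add: integral_pmf_UNIV)
  finally show ?thesis using IG by (simp add: q_def)
qed



lemma markov_map: "markov (map_pmf h r) A B C = markov r (\<lambda>e. A (h e)) (\<lambda>e. B (h e)) (\<lambda>e. C (h e))"
  unfolding markov_def by (simp add: vimage_def)

lemma map_pair_io: "map_pmf (\<lambda>e. (fst e, fst (snd e))) (io_joint (\<lambda>x. pair_pmf (K12 x) (K3 x)) \<mu>) = io_joint K12 \<mu>"
proof -
  have "map_pmf (\<lambda>z. (x, fst z)) (pair_pmf A B) = map_pmf (Pair x) A" for x :: "'a list" and A :: "'b pmf" and B :: "'c pmf"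
    using map_pmf_comp[of "Pair x" fst "pair_pmf A B"] by (simp add: map_fst_pair_pmf)
  thus ?thesis unfolding io_joint_def by (simp add: map_bind_pmf map_pmf_comp)
qed

lemma markov_dp:
  fixes \<mu> :: "'a list pmf" and K12 :: "'a list \<Rightarrow> 'b pmf" and K3 :: "'a list \<Rightarrow> 'c pmf"
  assumes mk: "markov (io_joint (\<lambda>x. pair_pmf (K12 x) (K3 x)) \<mu>) fst (\<lambda>e. fst (snd e)) (\<lambda>e. snd (snd e))"
  shows "MIK \<mu> K3 \<le> MIK \<mu> K12"
proof -
  define r where "r = io_joint (\<lambda>x. pair_pmf (K12 x) (K3 x)) \<mu>"
  define R where "R = bind_pmf \<mu> (\<lambda>x. pair_pmf (K12 x) (K3 x))"
  define Q where "Q = bind_pmf \<mu> K12"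
  have RQ: "map_pmf fst R = Q" unfolding R_def Q_def by (simp add: map_bind_pmf map_fst_pair_pmf)
  have rR: "map_pmf snd r = R" unfolding r_def R_def by (rule io_joint_snd)
  have p1: "measure r {e. fst e = x \<and> fst (snd e) = b \<and> snd (snd e) = c} = pmf \<mu> x * (pmf (K12 x) b * pmf (K3 x) c)" for x b c
  proof -
    have "{e. fst e = x \<and> fst (snd e) = b \<and> snd (snd e) = c} = {(x, (b, c))}" by auto
    thus ?thesis by (simp add: measure_pmf_single r_def pmf_io_joint pmf_pair)
  qed
  have p2: "measure r {e. fst (snd e) = b} = pmf Q b" for b
  proof -
    have "measure r {e. fst (snd e) = b} = pmf (map_pmf (\<lambda>e. fst (snd e)) r) b" by (simp add: pmf_map vimage_def)
    also have "map_pmf (\<lambda>e. fst (snd e)) r = Q" using rR RQ by (simp add: map_pmf_comp[symmetric])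
    finally show ?thesis .
  qed
  have p3: "measure r {e. fst e = x \<and> fst (snd e) = b} = pmf \<mu> x * pmf (K12 x) b" for x b
  proof -
    have "measure r {e. fst e = x \<and> fst (snd e) = b} = pmf (map_pmf (\<lambda>e. (fst e, fst (snd e))) r) (x, b)"
      by (simp add: pmf_map vimage_def)
    thus ?thesis by (simp add: r_def map_pair_io pmf_io_joint)
  qed
  have p4: "measure r {e. fst (snd e) = b \<and> snd (snd e) = c} = pmf R (b, c)" for b c
  proof -
    have "measure r {e. fst (snd e) = b \<and> snd (snd e) = c} = pmf (map_pmf snd r) (b, c)"
      by (simp add: pmf_map vimage_def prod_eq_iff)
    thus ?thesis using rR by simp
  qed
  have mk': "pmf \<mu> x * (pmf (K12 x) b * pmf (K3 x) c) * pmf Q b = pmf \<mu> x * pmf (K12 x) b * pmf R (b, c)" for x b c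
    using mk[unfolded markov_def, rule_format, of x b c] r_def p1 p2 p3 p4 by simp
  define T where "T b = embed_pmf (\<lambda>c. pmf R (b, c) / pmf Q b)" for b
  have pT: "pmf (T b) c = pmf R (b, c) / pmf Q b" if Qb: "pmf Q b > 0" for b c
  proof -
    have "(\<integral>\<^sup>+ c. ennreal (pmf R (b, c)) \<partial>count_space UNIV) = emeasure R (Pair b ` UNIV)"
      by (rule nn_integral_pmf') (simp add: inj_on_def)
    also have "Pair b ` UNIV = fst -` {b}" by auto
    also have "emeasure R (fst -` {b}) = ennreal (pmf Q b)"
      using emeasure_map_pmf[of fst R "{b}"] RQ by (simp add: emeasure_pmf_single)
    finally have s: "(\<integral>\<^sup>+ c. ennreal (pmf R (b, c)) \<partial>count_space UNIV) = ennreal (pmf Q b)" .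
    have "(\<integral>\<^sup>+ c. ennreal (pmf R (b, c) / pmf Q b) \<partial>count_space UNIV)
        = (\<integral>\<^sup>+ c. ennreal (pmf R (b, c)) * ennreal (1 / pmf Q b) \<partial>count_space UNIV)"
      using Qb by (intro nn_integral_cong) (simp add: ennreal_mult[symmetric])
    also have "\<dots> = ennreal (pmf Q b) * ennreal (1 / pmf Q b)" by (simp add: nn_integral_multc s)
    also have "\<dots> = 1" using Qb by (simp add: ennreal_mult[symmetric])
    finally show ?thesis unfolding T_def by (subst pmf_embed_pmf) auto
  qed
  have K3eq: "K3 x = bind_pmf (K12 x) T" if x: "x \<in> set_pmf \<mu>" for x
  proof (rule pmf_eqI)
    fix c
    have "pmf (bind_pmf (K12 x) T) c = (\<integral>b. pmf (T b) c \<partial>measure_pmf (K12 x))" by (rule pmf_bind)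
    also have "\<dots> = (\<integral>b. pmf (K3 x) c \<partial>measure_pmf (K12 x))"
    proof (rule integral_cong_AE)
      show "AE b in measure_pmf (K12 x). pmf (T b) c = pmf (K3 x) c"
      proof (unfold AE_measure_pmf_iff, intro ballI)
        fix b assume b: "b \<in> set_pmf (K12 x)"
        have mx: "pmf \<mu> x > 0" using x by (simp add: pmf_positive)
        have kb: "pmf (K12 x) b > 0" using b by (simp add: pmf_positive)
        have "pmf Q b \<ge> pmf \<mu> x * pmf (K12 x) b" unfolding Q_def by (rule pmf_le_bind)
        hence Qb: "pmf Q b > 0" using mx kb by (meson less_le_trans mult_pos_pos)
        have "pmf \<mu> x * pmf (K12 x) b * (pmf (K3 x) c * pmf Q b) = pmf \<mu> x * pmf (K12 x) b * pmf R (b, c)"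
          using mk'[of x b c] by (simp add: algebra_simps)
        hence "pmf (K3 x) c * pmf Q b = pmf R (b, c)" using mx kb by simp
        thus "pmf (T b) c = pmf (K3 x) c" using pT[OF Qb, of c] Qb by (simp add: divide_simps mult.commute) (metis mult_left_cancel less_irrefl)
      qed
    qed auto
    also have "\<dots> = pmf (K3 x) c" by simp
    finally show "pmf (K3 x) c = pmf (bind_pmf (K12 x) T) c" by simp
  qed
  show ?thesis by (rule MIK_dp) (rule K3eq)
qed



abbreviation PM :: "(nat \<Rightarrow> 'a) measure" where
  "PM \<equiv> PiM UNIV (\<lambda>_. count_space (UNIV :: 'a set))"

definition gblk :: "nat \<Rightarrow> nat \<Rightarrow> (nat \<Rightarrow> 'a) \<Rightarrow> 'a list" where
  "gblk s n \<omega> = map (\<lambda>i. \<omega> (s + i)) [0..<n]"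

lemma gblk_eq_iff: "gblk s n \<omega> = xs \<longleftrightarrow> length xs = n \<and> (\<forall>i<n. \<omega> (s + i) = xs ! i)"
  unfolding gblk_def by (auto simp: list_eq_iff_nth_eq)

lemma meas_gblk_PM: "gblk s n \<in> measurable (PM :: (nat \<Rightarrow> 'a::finite) measure) (count_space UNIV)"
proof (subst measurable_count_space_eq2_countable, intro conjI ballI)
  fix xs :: "'a list"
  show "gblk s n -` {xs} \<inter> space PM \<in> sets PM"
  proof (cases "length xs = n")
    case True
    have "gblk s n -` {xs} \<inter> space PM = space PM \<inter> (\<Inter>i\<in>{..<n}. (\<lambda>\<omega>. \<omega> (s + i)) -` {xs ! i} \<inter> space PM)"
      using True by (auto simp: gblk_eq_iff)
    also have "\<dots> \<in> sets PM"
    proof (cases "n = 0")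
      case True thus ?thesis by simp
    next
      case False
      have "(\<lambda>\<omega>. \<omega> (s + i)) -` {xs ! i} \<inter> space PM \<in> sets (PM :: (nat \<Rightarrow> 'a) measure)" for i
        by (rule measurable_sets[OF measurable_component_singleton]) auto
      note m = this
      show ?thesis using False by (intro sets.Int sets.top sets.finite_INT) (use m in \<open>auto simp: space_PiM\<close>)
    qed
    finally show ?thesis .
  next
    case False
    hence "gblk s n -` {xs} \<inter> space PM = {}" by (auto simp: gblk_def)
    thus ?thesis by simp
  qed
qed simp

lemma meas_gblk:
  fixes P :: "(nat \<Rightarrow> 'a::finite) measure"
  assumes "is_process P" shows "gblk s n \<in> measurable P (count_space UNIV)"
  using meas_gblk_PM assms unfolding is_process_def
  by (subst measurable_cong_sets[where M'=PM and N'="count_space UNIV"]) auto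

lemma block_law_gblk: "block_law P s n = distr P (count_space UNIV) (gblk s n)"
  unfolding block_law_def gblk_def ..

lemma xpre_law:
  fixes P :: "(nat \<Rightarrow> 'a::finite) measure"
  assumes pp: "is_process P"
  shows "measure_pmf (xpre P n) = block_law P 0 n"
proof -
  interpret prob_space P using pp by (simp add: is_process_def)
  define D where "D = distr P (count_space UNIV) (gblk 0 n)"
  have mg: "gblk 0 n \<in> measurable P (count_space UNIV)" by (rule meas_gblk[OF pp])
  interpret D: prob_space D unfolding D_def by (rule prob_space_distr[OF mg])
  have sD: "sets D = UNIV" by (simp add: D_def)
  have f: "measure P {\<omega> \<in> space P. map \<omega> [0..<n] = xs} = measure D {xs}" for xs
  proof -
    have "measure D {xs} = measure P (gblk 0 n -` {xs} \<inter> space P)"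
      unfolding D_def by (rule measure_distr[OF mg]) simp
    also have "gblk 0 n -` {xs} \<inter> space P = {\<omega> \<in> space P. map \<omega> [0..<n] = xs}"
      by (auto simp: gblk_def)
    finally show ?thesis by simp
  qed
  have sum1: "(\<integral>\<^sup>+ xs. ennreal (measure D {xs}) \<partial>count_space UNIV) = 1"
  proof -
    have "(\<integral>\<^sup>+ xs. ennreal (measure D {xs}) \<partial>count_space UNIV) = (\<integral>\<^sup>+ xs. emeasure D {xs} \<partial>count_space UNIV)"
      by (simp add: D.emeasure_eq_measure)
    also have "\<dots> = emeasure D UNIV"
      by (rule emeasure_countable_singleton[symmetric]) (auto simp: sD)
    also have "\<dots> = 1" using D.emeasure_space_1 by (simp add: D_def)
    finally show ?thesis .
  qed
  have pm: "pmf (xpre P n) xs = measure D {xs}" for xs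
    unfolding xpre_def f by (rule pmf_embed_pmf) (auto simp: sum1)
  have "measure_pmf (xpre P n) = D"
    by (rule measure_eqI_countable[where A=UNIV]) (auto simp: sD pm emeasure_pmf_single D.emeasure_eq_measure)
  thus ?thesis by (simp add: D_def block_law_gblk)
qed

lemma xpre_map:
  fixes P :: "(nat \<Rightarrow> 'a::finite) measure"
  assumes pp: "is_process P"
  shows "measure_pmf (map_pmf f (xpre P n)) = distr P (count_space UNIV) (\<lambda>\<omega>. f (gblk 0 n \<omega>))"
  unfolding map_pmf_rep_eq xpre_law[OF pp] block_law_gblk
  by (subst distr_distr) (auto simp: meas_gblk[OF pp] comp_def)

lemma blk_gblk: "m \<le> n \<Longrightarrow> blk (gblk 0 n \<omega>) (m, n) = gblk m (n - m) \<omega>"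
  unfolding blk_def gblk_def by (simp add: drop_map take_map list_eq_iff_nth_eq)

lemma blk_gblk0: "m \<le> n \<Longrightarrow> blk (gblk 0 n \<omega>) (0, m) = gblk 0 m \<omega>"
  unfolding blk_def gblk_def by (simp add: take_map list_eq_iff_nth_eq)

lemma xpre_prefix:
  fixes P :: "(nat \<Rightarrow> 'a::finite) measure"
  assumes pp: "is_process P" and mn: "m \<le> n"
  shows "map_pmf (\<lambda>x. blk x (0, m)) (xpre P n) = xpre P m"
proof -
  have "measure_pmf (map_pmf (\<lambda>x. blk x (0, m)) (xpre P n)) = measure_pmf (xpre P m)"
    unfolding xpre_map[OF pp] xpre_law[OF pp] block_law_gblk using mn
    by (simp add: blk_gblk0)
  thus ?thesis using measure_pmf_inject by blast
qed

lemma xpre_suffix: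
  fixes P :: "(nat \<Rightarrow> 'a::finite) measure"
  assumes pp: "is_process P" and st: "stationary P" and mn: "m \<le> n"
  shows "map_pmf (\<lambda>x. blk x (m, n)) (xpre P n) = xpre P (n - m)"
proof -
  have "measure_pmf (map_pmf (\<lambda>x. blk x (m, n)) (xpre P n)) = block_law P m (n - m)"
    unfolding xpre_map[OF pp] block_law_gblk using mn by (simp add: blk_gblk)
  also have "\<dots> = block_law P 0 (n - m)" using st by (simp add: stationary_def)
  also have "\<dots> = measure_pmf (xpre P (n - m))" by (simp add: xpre_law[OF pp])
  finally show ?thesis using measure_pmf_inject by blast
qed

lemma xpre_set:
  fixes P :: "(nat \<Rightarrow> 'a::finite) measure"
  assumes pp: "is_process P"
  shows "set_pmf (xpre P n) \<subseteq> {xs. length xs = n}" "finite (set_pmf (xpre P n))"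
proof -
  have "AE xs in measure_pmf (xpre P n). length xs = n"
    unfolding xpre_law[OF pp] block_law_gblk
    by (subst AE_distr_iff) (auto simp: meas_gblk[OF pp] gblk_def)
  thus s: "set_pmf (xpre P n) \<subseteq> {xs. length xs = n}" by (auto simp: AE_measure_pmf_iff)
  have "finite {xs :: 'a list. set xs \<subseteq> UNIV \<and> length xs = n}" by (rule finite_lists_length_eq) simp
  thus "finite (set_pmf (xpre P n))" using s by (auto intro: finite_subset)
qed

lemma pmf_list3: "pmf_list [p1, p2, p3] = map_pmf (\<lambda>((a, b), c). [a, b, c]) (pair_pmf (pair_pmf p1 p2) p3)"
  by (simp add: pair_pmf_def map_pmf_def bind_assoc_pmf bind_return_pmf)

lemma chan_joint3:
  "chan_joint Zs \<mu> [(0, m), (m, n), (0, n)] = map_pmf (\<lambda>(x, ((a, b), c)). (x, [a, b, c]))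
     (io_joint (\<lambda>x. pair_pmf (pair_pmf (Zs (blk x (0, m))) (Zs (blk x (m, n)))) (Zs (blk x (0, n)))) \<mu>)"
  unfolding chan_joint_def io_joint_def pmf_list3
  by (simp add: map_bind_pmf map_pmf_comp case_prod_unfold pair_pmf_def map_pmf_def bind_assoc_pmf bind_return_pmf)

lemma MIK_subadd:
  fixes P :: "(nat \<Rightarrow> 'a::finite) measure" and Zs :: "'a list \<Rightarrow> 'c pmf"
  assumes pp: "is_process P" and st: "stationary P" and mn: "m \<le> n"
    and mk: "markov (chan_joint Zs (xpre P n) [(0, m), (m, n), (0, n)])
          fst (\<lambda>(x, zs). (zs ! 0, zs ! 1)) (\<lambda>(x, zs). zs ! 2)"
  shows "MIK (xpre P n) Zs \<le> MIK (xpre P m) Zs + MIK (xpre P (n - m)) Zs"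
proof -
  define \<mu> where "\<mu> = xpre P n"
  define K1 where "K1 x = Zs (blk x (0, m))" for x
  define K2 where "K2 x = Zs (blk x (m, n))" for x
  define K3 where "K3 x = Zs (blk x (0, n))" for x
  have mk2: "markov (io_joint (\<lambda>x. pair_pmf (pair_pmf (K1 x) (K2 x)) (K3 x)) \<mu>) fst (\<lambda>e. fst (snd e)) (\<lambda>e. snd (snd e))"
  proof -
    have M: "markov (io_joint (\<lambda>x. pair_pmf (pair_pmf (K1 x) (K2 x)) (K3 x)) \<mu>)
       (\<lambda>e. fst ((\<lambda>(x, ((a, b), c)). (x, [a, b, c])) e))
       (\<lambda>e. (\<lambda>(x, zs). (zs ! 0, zs ! 1)) ((\<lambda>(x, ((a, b), c)). (x, [a, b, c])) e))
       (\<lambda>e. (\<lambda>(x, zs). zs ! 2) ((\<lambda>(x, ((a, b), c)). (x, [a, b, c])) e))"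
      using mk unfolding chan_joint3 markov_map \<mu>_def K1_def K2_def K3_def .
    moreover have e: "(\<lambda>e. fst ((\<lambda>(x, ((a, b), c)). (x, [a, b, c])) e)) = fst"
      "(\<lambda>e. (\<lambda>(x, zs). (zs ! 0, zs ! 1)) ((\<lambda>(x, ((a, b), c)). (x, [a, b, c])) e)) = (\<lambda>e. fst (snd e))"
      "(\<lambda>e. (\<lambda>(x, zs). zs ! 2) ((\<lambda>(x, ((a, b), c)). (x, [a, b, c])) e)) = (\<lambda>e. snd (snd e))"
      by (auto simp: fun_eq_iff split: prod.splits)
    show ?thesis using M unfolding e .
  qed
  have fin: "finite (set_pmf \<mu>)" unfolding \<mu>_def by (rule xpre_set[OF pp])
  have "MIK \<mu> Zs = MIK \<mu> K3"
  proof (rule MIK_cong)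
    fix x assume "x \<in> set_pmf \<mu>"
    hence "length x = n" using xpre_set(1)[OF pp] by (auto simp: \<mu>_def)
    thus "Zs x = K3 x" by (simp add: K3_def blk_def)
  qed
  also have "\<dots> \<le> MIK \<mu> (\<lambda>x. pair_pmf (K1 x) (K2 x))" by (rule markov_dp[OF mk2])
  also have "\<dots> \<le> MIK \<mu> K1 + MIK \<mu> K2" by (rule MIK_pair[OF fin])
  also have "MIK \<mu> K1 = MIK (xpre P m) Zs"
    using MIK_map[where K=Zs and f="\<lambda>x. blk x (0, m)" and \<mu>="xpre P n"] xpre_prefix[OF pp mn] by (simp add: K1_def[abs_def] \<mu>_def)
  also have "MIK \<mu> K2 = MIK (xpre P (n - m)) Zs"
    using MIK_map[where K=Zs and f="\<lambda>x. blk x (m, n)" and \<mu>="xpre P n"] xpre_suffix[OF pp st mn] by (simp add: K2_def[abs_def] \<mu>_def)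
  finally show ?thesis unfolding \<mu>_def .
qed



lemma subadd_iter:
  fixes a :: "nat \<Rightarrow> real"
  assumes sa: "\<And>m k. m \<ge> 1 \<Longrightarrow> k \<ge> 1 \<Longrightarrow> a (m + k) \<le> a m + a k"
    and m: "m \<ge> 1" and r: "r \<ge> 1"
  shows "a (q * m + r) \<le> real q * a m + a r"
proof (induction q)
  case 0 thus ?case by simp
next
  case (Suc q)
  have "a (Suc q * m + r) = a (m + (q * m + r))" by (simp add: algebra_simps)
  also have "\<dots> \<le> a m + a (q * m + r)" using sa m r by simp
  also have "\<dots> \<le> a m + (real q * a m + a r)" using Suc by simp
  finally show ?case by (simp add: algebra_simps)
qed

lemma fekete:
  fixes a :: "nat \<Rightarrow> real"
  assumes nn: "\<And>n. n \<ge> 1 \<Longrightarrow> a n \<ge> 0"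
    and sa: "\<And>m k. m \<ge> 1 \<Longrightarrow> k \<ge> 1 \<Longrightarrow> a (m + k) \<le> a m + a k"
  shows "(\<lambda>n. a n / real n) \<longlonglongrightarrow> (INF n\<in>{1..}. a n / real n)"
proof -
  define L where "L = (INF n\<in>{1..}. a n / real n)"
  have bdd: "bdd_below ((\<lambda>n. a n / real n) ` {1..})"
    by (rule bdd_belowI[of _ 0]) (use nn in auto)
  have Lle: "L \<le> a n / real n" if "n \<ge> 1" for n
    unfolding L_def using bdd that by (intro cINF_lower) auto
  show ?thesis unfolding L_def[symmetric]
  proof (rule order_tendstoI)
    fix y assume "y < L"
    show "\<forall>\<^sub>F n in sequentially. y < a n / real n"
      using eventually_ge_at_top[of 1] by eventually_elim (use Lle \<open>y < L\<close> in force)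
  next
    fix y assume yL: "L < y"
    define e where "e = y - L"
    have e: "e > 0" using yL by (simp add: e_def)
    have "L < L + e / 2" using e by simp
    hence "\<exists>m\<in>{1..}. a m / real m < L + e / 2"
      unfolding L_def using bdd by (subst (asm) cINF_less_iff) auto
    then obtain m where m1: "m \<ge> 1" and am: "a m / real m < L + e / 2" by auto
    define C where "C = Max ((\<lambda>r. a r) ` {1..m})"
    have C: "a r \<le> C" if "r \<in> {1..m}" for r unfolding C_def using that by (intro Max_ge) auto
    have C0: "C \<ge> 0" using C[of 1] nn[of 1] m1 by simp
    have amn: "a m \<ge> 0" using nn m1 by simp
    have bound: "a n / real n \<le> a m / real m + C / real n" if n1: "n \<ge> 1" for n
    proof -
      define q where "q = (n - 1) div m"
      define r where "r = (n - 1) mod m + 1"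
      have nqr: "n = q * m + r" using n1 m1 by (simp add: q_def r_def)
      have "(n - 1) mod m < m" using m1 by simp
      hence r1: "r \<in> {1..m}" by (simp add: r_def)
      have "a n \<le> real q * a m + a r" unfolding nqr by (rule subadd_iter[OF sa m1]) (use r1 in auto)
      also have "\<dots> \<le> real q * a m + C" using C[OF r1] by simp
      also have "real q * a m \<le> real n * (a m / real m)"
      proof -
        have "real q * real m \<le> real n" unfolding nqr by simp
        hence "real q * real m * (a m / real m) \<le> real n * (a m / real m)"
          using amn m1 by (intro mult_right_mono) auto
        thus ?thesis using m1 by simp
      qed
      finally have G: "a n \<le> real n * (a m / real m) + C" by simp
      have "a n / real n \<le> (real n * (a m / real m) + C) / real n"
        using divide_right_mono[OF G, of "real n"] by simp
      also have "\<dots> = a m / real m + C / real n" using n1 by (simp add: add_divide_distrib)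
      finally show ?thesis .
    qed
    have ev: "\<forall>\<^sub>F n in sequentially. C / real n < e / 2"
    proof -
      have "(\<lambda>n. C / real n) \<longlonglongrightarrow> 0" by (rule lim_const_over_n)
      thus ?thesis using e by (auto dest: order_tendstoD(2)[where a="e/2"])
    qed
    show "\<forall>\<^sub>F n in sequentially. a n / real n < y"
      using ev eventually_ge_at_top[of 1]
    proof eventually_elim
      case (elim n)
      have "a n / real n \<le> a m / real m + C / real n" using bound elim by simp
      also have "\<dots> < L + e / 2 + e / 2" using am elim(1) by linarith
      finally show ?case by (simp add: e_def)
    qed
  qed
qed

lemma MIK_return: "MIK (return_pmf x) K = 0"
proof -
  have "phi (pmf (K x) y) (pmf (K x) y) = 0" for y
    by (cases "pmf (K x) y = 0") (auto simp: phi_def)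
  thus ?thesis by (simp add: MIK_def Dn_def bind_return_pmf)
qed

theorem lemma3p4:
  fixes Z :: "'a::finite list \<Rightarrow> 'b pmf"
    and Zs :: "'a list \<Rightarrow> 'c pmf"
    and P :: "(nat \<Rightarrow> 'a) measure"
  assumes "is_process P" and "stationary P" and "admissible Z Zs"
  shows "info_rate Z P = info_rate Zs P
       \<and> convergent (\<lambda>n. mi_n Zs P n / real n)
       \<and> info_rate Zs P = ereal (lim (\<lambda>n. mi_n Zs P n / real n))
       \<and> SCap Z = SCap Zs"
proof -
  note pp = assms(1) and st = assms(2)
  have A1: "\<exists>c>0. \<forall>P. is_process P \<longrightarrow> (\<forall>n\<ge>1.
        entropy_pmf (bind_pmf (xpre P n) Zs) \<le> ennreal (c * real n))"
    using assms(3) unfolding admissible_def by (rule conjunct1)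
  have A2: "\<forall>P. is_process P \<longrightarrow> info_rate Z P = info_rate Zs P"
    using assms(3) unfolding admissible_def by (rule conjunct2[THEN conjunct1])
  have A3: "\<forall>P. is_process P \<longrightarrow> (\<forall>m n. 1 \<le> m \<and> m \<le> n \<longrightarrow>
        markov (chan_joint Zs (xpre P n) [(0, m), (m, n), (0, n)])
          fst (\<lambda>(x, zs). (zs ! 0, zs ! 1)) (\<lambda>(x, zs). zs ! 2))"
    using assms(3) unfolding admissible_def by (rule conjunct2[THEN conjunct2, THEN conjunct1])
  from A1 obtain c where c: "c > 0"
    and ent0: "\<forall>P. is_process P \<longrightarrow> (\<forall>n\<ge>1. entropy_pmf (bind_pmf (xpre P n) Zs) \<le> ennreal (c * real n))"
    by blast
  have ent: "entropy_pmf (bind_pmf (xpre P n) Zs) \<le> ennreal (c * real n)" if "is_process P" "n \<ge> 1" for P n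
    using ent0 that by blast
  have eqr: "\<And>P. is_process P \<Longrightarrow> info_rate Z P = info_rate Zs P"
    using A2 by blast
  have mk: "\<And>m n. 1 \<le> m \<Longrightarrow> m \<le> n \<Longrightarrow> markov (chan_joint Zs (xpre P n) [(0, m), (m, n), (0, n)])
          fst (\<lambda>(x, zs). (zs ! 0, zs ! 1)) (\<lambda>(x, zs). zs ! 2)"
    using A3 pp by blast
  have fin: "MIK (xpre P n) Zs \<noteq> \<top>" if "n \<ge> 1" for n
  proof -
    have "MIK (xpre P n) Zs \<le> ennreal (ln 2) * entropy_pmf (bind_pmf (xpre P n) Zs) + 1" by (rule MIK_entropy)
    also have "\<dots> \<le> ennreal (ln 2) * ennreal (c * real n) + 1"
      using ent[OF pp that] by (intro add_mono mult_left_mono) auto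
    finally show ?thesis by (auto simp: top_unique ennreal_mult_eq_top_iff)
  qed
  define a where "a n = mi_n Zs P n" for n
  have aeq: "a n = enn2real (MIK (xpre P n) Zs) / ln 2" if "n \<ge> 1" for n
    unfolding a_def mi_n_def using fin[OF that] by (rule mi_conv)
  have nn: "a n \<ge> 0" if "n \<ge> 1" for n using aeq[OF that] by simp
  have sa: "a (m + k) \<le> a m + a k" if m: "m \<ge> 1" and k: "k \<ge> 1" for m k
  proof -
    have "MIK (xpre P (m + k)) Zs \<le> MIK (xpre P m) Zs + MIK (xpre P (m + k - m)) Zs"
      by (rule MIK_subadd[OF pp st _ mk]) (use m in auto)
    hence "enn2real (MIK (xpre P (m + k)) Zs) \<le> enn2real (MIK (xpre P m) Zs + MIK (xpre P k) Zs)"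
      using fin m k by (intro enn2real_mono) (auto simp: top.not_eq_extremum)
    also have "\<dots> = enn2real (MIK (xpre P m) Zs) + enn2real (MIK (xpre P k) Zs)"
      using fin m k by (intro enn2real_plus) (auto simp: top.not_eq_extremum)
    finally have F: "enn2real (MIK (xpre P (m + k)) Zs) \<le> enn2real (MIK (xpre P m) Zs) + enn2real (MIK (xpre P k) Zs)" .
    show ?thesis using m k aeq[of m] aeq[of k] aeq[of "m + k"] divide_right_mono[OF F, of "ln 2"]
      by (simp add: add_divide_distrib)
  qed
  define L where "L = (INF n\<in>{1..}. a n / real n)"
  have lim: "(\<lambda>n. a n / real n) \<longlonglongrightarrow> L" unfolding L_def by (rule fekete[OF nn sa])
  have conv: "convergent (\<lambda>n. mi_n Zs P n / real n)" using lim unfolding a_def convergent_def by blast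
  have limL: "lim (\<lambda>n. mi_n Zs P n / real n) = L" using lim unfolding a_def by (rule limI)
  have "info_rate Zs P = ereal L"
    unfolding info_rate_def a_def[symmetric]
    by (rule lim_imp_Liminf) (auto intro: tendsto_ereal lim)
  moreover have "SCap Z = SCap Zs"
    unfolding SCap_def using eqr by (intro SUP_cong) auto
  ultimately show ?thesis using eqr[OF pp] conv limL by simp
qed


end
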